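(* Fix an integer $r\ge0$. There is a constant $C_r>0$ depending only on $r$ such that for every $n\ge1$ and every $\theta\in\mathbb{R}^n$, $$\|\theta-P^{(n,r)}\theta\|_\infty\le C_r\,\mathrm{TV}^{(r+1)}(\theta).$$
   Context: $P^{(n,r)}$ is the orthogonal projection matrix in $\mathbb{R}^n$ onto the subspace $\{(p(1/n),p(2/n),\dots,p(n/n)): p\text{ a real polynomial of degree at most } r\}$. For $\theta\in\mathbb{R}^n$: $D^{(1)}\theta=(\theta_2-\theta_1,\dots,\theta_n-\theta_{n-1})$, $D^{(s)}\theta=D^{(1)}(D^{(s-1)}\theta)\in\mathbb{R}^{n-s}$, and $\mathrm{TV}^{(s)}(\theta)=n^{s-1}\|D^{(s)}\theta\|_1$; thus $\mathrm{TV}^{(r+1)}(\theta)=n^{r}\|D^{(r+1)}\theta\|_1$. *)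

theory Defs
  imports Complex_Main "HOL-Computational_Algebra.Polynomial"
begin

text \<open>Vectors in R^n are represented as functions nat \<Rightarrow> real, with coordinates
  indexed by 1..n (values outside 1..n are irrelevant).\<close>

definition polyvec :: "nat \<Rightarrow> real poly \<Rightarrow> nat \<Rightarrow> real" where
  "polyvec n p = (\<lambda>i. if i \<in> {1..n} then poly p (real i / real n) else 0)"

definition proj :: "nat \<Rightarrow> nat \<Rightarrow> (nat \<Rightarrow> real) \<Rightarrow> nat \<Rightarrow> real" where
  "proj n r \<theta> = (THE v. (\<exists>p. degree p \<le> r \<and> v = polyvec n p) \<and>
      (\<forall>q. degree q \<le> r \<longrightarrow> (\<Sum>i=1..n. (\<theta> i - v i) * polyvec n q i) = 0))"

definition D1 :: "(nat \<Rightarrow> real) \<Rightarrow> nat \<Rightarrow> real" where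
  "D1 \<theta> = (\<lambda>i. \<theta> (i + 1) - \<theta> i)"

text \<open>D^(s) theta, whose meaningful coordinates are 1..n-s.\<close>
definition Dk :: "nat \<Rightarrow> (nat \<Rightarrow> real) \<Rightarrow> nat \<Rightarrow> real" where
  "Dk s \<theta> = (D1 ^^ s) \<theta>"

definition TV :: "nat \<Rightarrow> nat \<Rightarrow> (nat \<Rightarrow> real) \<Rightarrow> real" where
  "TV n s \<theta> = real n ^ (s - 1) * (\<Sum>i=1..n-s. \<bar>Dk s \<theta> i\<bar>)"

definition supnorm :: "nat \<Rightarrow> (nat \<Rightarrow> real) \<Rightarrow> real" where
  "supnorm n x = Max ((\<lambda>i. \<bar>x i\<bar>) ` {1..n})"

end

theory Submission imports Defs "HOL-Analysis.Convex" begin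

lemma delta_deg:
  fixes P :: "real poly"
  assumes "degree P \<le> Suc s"
  shows "degree (P - pcompose P [:h,1:]) \<le> s"
proof (rule degree_le, intro allI impI)
  fix i assume i: "s < i"
  have dc: "degree (pcompose P [:h,1:]) = degree P" by (simp add: degree_pcompose)
  show "coeff (P - pcompose P [:h, 1:]) i = 0"
  proof (cases "i = Suc s \<and> degree P = Suc s")
    case True
    have "lead_coeff (pcompose P [:h,1:]) = lead_coeff P"
      by (subst lead_coeff_comp) auto
    then show ?thesis using True dc by simp
  next
    case False
    then have "i > degree P" using i assms by auto
    then show ?thesis using dc by (simp add: coeff_eq_0)
  qed
qed

fun fd :: "real \<Rightarrow> nat \<Rightarrow> (real \<Rightarrow> real) \<Rightarrow> real \<Rightarrow> real" where
  "fd h 0 f a = f a"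
| "fd h (Suc s) f a = fd h s f a - fd h s f (a + h)"

lemma fd_comm: "fd h (Suc s) f a = fd h s (\<lambda>x. f x - f (x + h)) a"
proof (induction s arbitrary: a)
  case 0
  then show ?case by simp
next
  case (Suc s)
  have "fd h (Suc (Suc s)) f a = fd h (Suc s) f a - fd h (Suc s) f (a + h)"
    by (simp only: fd.simps(2)[of h "Suc s"])
  also have "\<dots> = fd h s (\<lambda>x. f x - f (x + h)) a - fd h s (\<lambda>x. f x - f (x + h)) (a + h)"
    using Suc.IH[of a] Suc.IH[of "a+h"] by simp
  finally show ?case by simp
qed

lemma fd_poly_zero:
  fixes P :: "real poly"
  assumes "degree P \<le> s"
  shows "fd h (Suc s) (poly P) a = 0"
  using assms
proof (induction s arbitrary: P a)
  case 0
  then obtain c where "P = [:c:]" by (auto elim: degree_eq_zeroE)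
  then show ?case by simp
next
  case (Suc s)
  have "fd h (Suc (Suc s)) (poly P) a = fd h (Suc s) (\<lambda>x. poly P x - poly P (x + h)) a"
    by (rule fd_comm)
  also have "(\<lambda>x. poly P x - poly P (x + h)) = poly (P - pcompose P [:h,1:])"
    by (auto simp: poly_pcompose algebra_simps)
  also have "fd h (Suc s) \<dots> a = 0"
    by (rule Suc.IH) (rule delta_deg[OF Suc.prems])
  finally show ?case .
qed

lemma fd_bound: "\<bar>fd h s f a\<bar> \<le> 2^s * (\<Sum>k=0..s. \<bar>f (a + real k * h)\<bar>)"
proof (induction s arbitrary: a)
  case 0
  then show ?case by simp
next
  case (Suc s)
  have sh: "(\<Sum>k=0..s. \<bar>f (a + h + real k * h)\<bar>) = (\<Sum>k=1..Suc s. \<bar>f (a + real k * h)\<bar>)"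
  proof -
    have "(\<Sum>k=1..Suc s. \<bar>f (a + real k * h)\<bar>) = (\<Sum>k=0..s. \<bar>f (a + real (Suc k) * h)\<bar>)"
      using sum.shift_bounds_cl_Suc_ivl[of "\<lambda>k. \<bar>f (a + real k * h)\<bar>" 0 s] by simp
    then show ?thesis by (simp add: algebra_simps)
  qed
  have m1: "(\<Sum>k=0..s. \<bar>f (a + real k * h)\<bar>) \<le> (\<Sum>k=0..Suc s. \<bar>f (a + real k * h)\<bar>)"
    by (rule sum_mono2) auto
  have m2: "(\<Sum>k=1..Suc s. \<bar>f (a + real k * h)\<bar>) \<le> (\<Sum>k=0..Suc s. \<bar>f (a + real k * h)\<bar>)"
    by (rule sum_mono2) auto
  have "\<bar>fd h (Suc s) f a\<bar> \<le> \<bar>fd h s f a\<bar> + \<bar>fd h s f (a + h)\<bar>" by simp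
  also have "\<dots> \<le> 2^s * (\<Sum>k=0..s. \<bar>f (a + real k * h)\<bar>) + 2^s * (\<Sum>k=0..s. \<bar>f (a + h + real k * h)\<bar>)"
    using Suc.IH[of a] Suc.IH[of "a+h"] by linarith
  also have "\<dots> \<le> 2^(Suc s) * (\<Sum>k=0..Suc s. \<bar>f (a + real k * h)\<bar>)"
  proof -
    have "2^s * (\<Sum>k=0..s. \<bar>f (a + real k * h)\<bar>) \<le> 2^s * (\<Sum>k=0..Suc s. \<bar>f (a + real k * h)\<bar>)"
      using m1 by (intro mult_left_mono) auto
    moreover have "2^s * (\<Sum>k=1..Suc s. \<bar>f (a + real k * h)\<bar>) \<le> 2^s * (\<Sum>k=0..Suc s. \<bar>f (a + real k * h)\<bar>)"
      using m2 by (intro mult_left_mono) auto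
    ultimately show ?thesis unfolding sh by (simp only: power_Suc)
  qed
  finally show ?case .
qed

lemma fd_lead: "\<bar>f a\<bar> \<le> \<bar>fd h s f a\<bar> + 2^s * (\<Sum>k=1..s. \<bar>f (a + real k * h)\<bar>)"
proof (induction s)
  case 0
  then show ?case by simp
next
  case (Suc s)
  have sh: "(\<Sum>k=0..s. \<bar>f (a + h + real k * h)\<bar>) = (\<Sum>k=1..Suc s. \<bar>f (a + real k * h)\<bar>)"
  proof -
    have "(\<Sum>k=1..Suc s. \<bar>f (a + real k * h)\<bar>) = (\<Sum>k=0..s. \<bar>f (a + real (Suc k) * h)\<bar>)"
      using sum.shift_bounds_cl_Suc_ivl[of "\<lambda>k. \<bar>f (a + real k * h)\<bar>" 0 s] by simp
    then show ?thesis by (simp add: algebra_simps)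
  qed
  have m1: "(\<Sum>k=1..s. \<bar>f (a + real k * h)\<bar>) \<le> (\<Sum>k=1..Suc s. \<bar>f (a + real k * h)\<bar>)"
    by (rule sum_mono2) auto
  have b: "\<bar>fd h s f (a + h)\<bar> \<le> 2^s * (\<Sum>k=1..Suc s. \<bar>f (a + real k * h)\<bar>)"
    using fd_bound[of h s f "a+h"] sh by simp
  have "\<bar>fd h s f a\<bar> \<le> \<bar>fd h (Suc s) f a\<bar> + \<bar>fd h s f (a + h)\<bar>" by simp
  moreover have "2^s * (\<Sum>k=1..s. \<bar>f (a + real k * h)\<bar>) \<le> 2^s * (\<Sum>k=1..Suc s. \<bar>f (a + real k * h)\<bar>)"
    using m1 by (intro mult_left_mono) auto
  ultimately show ?case using Suc.IH b by (simp only: power_Suc)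
qed


lemma polyvec_add: "polyvec n (p + q) i = polyvec n p i + polyvec n q i"
  by (simp add: polyvec_def)
lemma polyvec_diff: "polyvec n (p - q) i = polyvec n p i - polyvec n q i"
  by (simp add: polyvec_def)
lemma polyvec_smult: "polyvec n (smult a p) i = a * polyvec n p i"
  by (simp add: polyvec_def)

lemma proj_exists:
  "\<exists>p. degree p \<le> r \<and> (\<forall>q. degree q \<le> r \<longrightarrow> (\<Sum>i=1..n. (\<theta> i - polyvec n p i) * polyvec n q i) = 0)"
proof (induction r arbitrary: \<theta>)
  case 0
  define c where "c = (\<Sum>i=1..n. \<theta> i) / real n"
  have "(\<Sum>i=1..n. (\<theta> i - polyvec n [:c:] i) * polyvec n q i) = 0" if dq0: "degree q \<le> 0" for q
  proof -
    obtain d where d: "q = [:d:]" using dq0 degree_eq_zeroE[of q] by auto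
    have "(\<Sum>i=1..n. (\<theta> i - polyvec n [:c:] i) * polyvec n q i) = (\<Sum>i=1..n. (\<theta> i - c) * d)"
      by (intro sum.cong) (auto simp: polyvec_def d)
    also have "\<dots> = d * ((\<Sum>i=1..n. \<theta> i) - real n * c)"
      by (simp add: sum_subtractf sum_distrib_left algebra_simps)
    also have "\<dots> = 0" by (cases "n = 0") (auto simp: c_def)
    finally show ?thesis .
  qed
  then show ?case by (intro exI[of _ "[:c:]"]) auto
next
  case (Suc r)
  define ip where "ip x y = (\<Sum>i=1..n. x i * y i)" for x y :: "nat \<Rightarrow> real"
  obtain pw where pw: "degree pw \<le> r"
    "\<forall>q. degree q \<le> r \<longrightarrow> (\<Sum>i=1..n. (polyvec n (monom 1 (Suc r)) i - polyvec n pw i) * polyvec n q i) = 0"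
    using Suc.IH[of "polyvec n (monom 1 (Suc r))"] by blast
  define W where "W = monom 1 (Suc r) - pw"
  define w where "w = polyvec n W"
  have degW: "degree W \<le> Suc r" unfolding W_def using pw(1)
    by (intro degree_diff_le) (auto simp: degree_monom_le)
  have cW: "coeff W (Suc r) = 1" unfolding W_def using pw(1) by (simp add: coeff_eq_0)
  have wort: "ip w (polyvec n q) = 0" if "degree q \<le> r" for q
    using pw(2) that unfolding ip_def w_def W_def polyvec_diff by blast
  obtain p0 where p0: "degree p0 \<le> r"
    "\<forall>q. degree q \<le> r \<longrightarrow> (\<Sum>i=1..n. (\<theta> i - polyvec n p0 i) * polyvec n q i) = 0"
    using Suc.IH[of \<theta>] by blast
  define N where "N = ip w w"
  define a where "a = ip (\<lambda>i. \<theta> i - polyvec n p0 i) w"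
  define p where "p = p0 + smult (a / N) W"
  have degp: "degree p \<le> Suc r" unfolding p_def using p0(1) degW
    by (intro degree_add_le) (auto intro: order_trans[OF degree_smult_le])
  define e where "e i = \<theta> i - polyvec n p i" for i
  have e_eq: "e i = (\<theta> i - polyvec n p0 i) - (a / N) * w i" for i
    unfolding e_def p_def w_def polyvec_add polyvec_smult by simp
  have eq': "ip e (polyvec n q) = 0" if "degree q \<le> r" for q
  proof -
    have "ip e (polyvec n q) = ip (\<lambda>i. \<theta> i - polyvec n p0 i) (polyvec n q) - (a / N) * ip w (polyvec n q)"
      unfolding ip_def sum_distrib_left sum_subtractf[symmetric]
      by (intro sum.cong refl) (simp add: e_eq algebra_simps)
    also have "\<dots> = 0" using p0(2) that wort[OF that] unfolding ip_def by simp
    finally show ?thesis .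
  qed
  have ew: "ip e w = 0"
  proof (cases "N = 0")
    case True
    have "\<forall>i\<in>{1..n}. w i * w i = 0"
      using True unfolding N_def ip_def by (subst sum_nonneg_eq_0_iff[symmetric]) auto
    then show ?thesis unfolding ip_def by simp
  next
    case False
    have "ip e w = ip (\<lambda>i. \<theta> i - polyvec n p0 i) w - (a / N) * ip w w"
      unfolding ip_def sum_distrib_left sum_subtractf[symmetric]
      by (intro sum.cong refl) (simp add: e_eq algebra_simps)
    then have "ip e w = a - (a / N) * N" by (simp add: a_def N_def)
    then show ?thesis using False by simp
  qed
  have "ip e (polyvec n q) = 0" if q: "degree q \<le> Suc r" for q
  proof -
    define q' where "q' = q - smult (coeff q (Suc r)) W"
    have dq': "degree q' \<le> r"
    proof (rule degree_le, intro allI impI)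
      fix i assume "r < i"
      then consider "i = Suc r" | "i > Suc r" by linarith
      then show "coeff q' i = 0"
      proof cases
        case 1 then show ?thesis by (simp add: q'_def cW)
      next
        case 2 then show ?thesis using q degW by (simp add: q'_def coeff_eq_0)
      qed
    qed
    have "polyvec n q = (\<lambda>i. coeff q (Suc r) * w i + polyvec n q' i)"
      by (auto simp: q'_def w_def polyvec_diff polyvec_smult)
    then have "ip e (polyvec n q) = coeff q (Suc r) * ip e w + ip e (polyvec n q')"
      unfolding ip_def sum_distrib_left sum.distrib[symmetric]
      by (intro sum.cong refl) (simp add: algebra_simps)
    then show ?thesis using ew eq'[OF dq'] by simp
  qed
  then show ?case using degp unfolding ip_def e_def by blast
qed

lemma proj_char:
  "\<exists>p. degree p \<le> r \<and> proj n r \<theta> = polyvec n p \<and>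
     (\<forall>q. degree q \<le> r \<longrightarrow> (\<Sum>i=1..n. (\<theta> i - proj n r \<theta> i) * polyvec n q i) = 0)"
proof -
  let ?P = "\<lambda>v. (\<exists>p. degree p \<le> r \<and> v = polyvec n p) \<and>
      (\<forall>q. degree q \<le> r \<longrightarrow> (\<Sum>i=1..n. (\<theta> i - v i) * polyvec n q i) = 0)"
  have ex: "\<exists>v. ?P v" using proj_exists[where r=r and n=n and \<theta>=\<theta>] by blast
  have un: "v1 = v2" if P12: "?P v1" "?P v2" for v1 v2
  proof -
    obtain p1 where p1: "degree p1 \<le> r" "v1 = polyvec n p1" using P12(1) by blast
    obtain p2 where p2: "degree p2 \<le> r" "v2 = polyvec n p2" using P12(2) by blast
    have dd: "degree (p1 - p2) \<le> r" using p1 p2 by (intro degree_diff_le)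
    have o1: "(\<Sum>i=1..n. (\<theta> i - v1 i) * polyvec n (p1 - p2) i) = 0" using P12(1) dd by blast
    have o2: "(\<Sum>i=1..n. (\<theta> i - v2 i) * polyvec n (p1 - p2) i) = 0" using P12(2) dd by blast
    have "(\<Sum>i=1..n. (v1 i - v2 i) * (v1 i - v2 i)) =
       (\<Sum>i=1..n. (\<theta> i - v2 i) * polyvec n (p1 - p2) i) - (\<Sum>i=1..n. (\<theta> i - v1 i) * polyvec n (p1 - p2) i)"
      unfolding sum_subtractf[symmetric]
      by (intro sum.cong refl) (simp add: polyvec_diff p1(2) p2(2) algebra_simps)
    then have "(\<Sum>i=1..n. (v1 i - v2 i) * (v1 i - v2 i)) = 0" using o1 o2 by simp
    then have "\<forall>i\<in>{1..n}. (v1 i - v2 i) * (v1 i - v2 i) = 0"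
      by (subst sum_nonneg_eq_0_iff[symmetric]) auto
    then have "\<forall>i\<in>{1..n}. v1 i = v2 i" by simp
    moreover have "v1 i = 0" "v2 i = 0" if "i \<notin> {1..n}" for i
      using that p1 p2 by (auto simp: polyvec_def)
    ultimately show ?thesis by (metis ext)
  qed
  have u: "\<exists>!v. ?P v" using ex un by blast
  have "?P (THE v. ?P v)" by (rule theI'[OF u])
  then have "?P (proj n r \<theta>)" unfolding proj_def .
  then show ?thesis by blast
qed


lemma inv_ineq:
  fixes P :: "real poly"
  assumes deg: "degree P \<le> r" and n: "n \<ge> 1" and i: "i \<in> {1..n}"
  shows "real n * \<bar>poly P (real i / real n)\<bar>
     \<le> (4 * (real r + 1)^2 * 2^(r+1)) * (\<Sum>j=1..n. \<bar>poly P (real j / real n)\<bar>)"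
proof -
  define u where "u j = \<bar>poly P (real j / real n)\<bar>" for j
  define S where "S = (\<Sum>j=1..n. u j)"
  have u0: "u j \<ge> 0" for j by (simp add: u_def)
  have uiS: "u i \<le> S" unfolding S_def
    using i by (intro member_le_sum) (auto simp: u0)
  have S0: "S \<ge> 0" unfolding S_def by (intro sum_nonneg) (simp add: u0)
  have "real n * u i \<le> (4 * (real r + 1)^2 * 2^(r+1)) * S"
  proof (cases "n < 2 * (r + 1)")
    case True
    have "real n * u i \<le> real n * S" using uiS by (intro mult_left_mono) auto
    also have "\<dots> \<le> (4 * (real r + 1)^2 * 2^(r+1)) * S"
    proof (intro mult_right_mono S0)
      have "real n \<le> real (2 * (r + 1))" using True by simp
      then have "real n \<le> 2 * (real r + 1)" by simp
      also have "\<dots> \<le> 4 * (real r + 1)^2 * 1"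
        by (simp add: power2_eq_square algebra_simps)
      also have "\<dots> \<le> 4 * (real r + 1)^2 * 2^(r+1)"
        using one_le_power[of "2::real" "r+1"] by (intro mult_left_mono) auto
      finally show "real n \<le> 4 * (real r + 1)^2 * 2^(r+1)" .
    qed
    finally show ?thesis .
  next
    case False
    define M where "M = n div (2 * (r + 1))"
    have M1: "M \<ge> 1" using False unfolding M_def
      by (simp add: div_greater_zero_iff Suc_le_eq)
    have MM: "M * (2 * (r + 1)) \<le> n" unfolding M_def by (rule div_times_less_eq_dividend)
    have nM: "n < (M + 1) * (2 * (r + 1))" unfolding M_def
      using dividend_less_times_div[of "2 * (r + 1)" n] by (simp add: algebra_simps)
    define \<sigma> where "\<sigma> k m = (if 2 * i \<le> n then i + k * m else i - k * m)" for k m :: nat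
    have km: "2 * (k * m) \<le> n" if "k \<le> r + 1" "m \<le> M" for k m
    proof -
      have "k * m \<le> (r + 1) * M" using that by (intro mult_le_mono)
      then show ?thesis using MM by (simp add: algebra_simps)
    qed
    have srange: "\<sigma> k m \<in> {1..n}" if "k \<le> r + 1" "m \<le> M" for k m
      using km[OF that] i unfolding \<sigma>_def by auto
    have sreal: "real (\<sigma> k m) / real n = real i / real n + real k * ((if 2 * i \<le> n then 1 else -1) * real m / real n)"
      if "k \<le> r + 1" "m \<le> M" for k m
      using km[OF that] i n unfolding \<sigma>_def by (auto simp: field_simps of_nat_diff)
    have step: "u i \<le> 2^(r+1) * (\<Sum>k=1..r+1. u (\<sigma> k m))" if m: "m \<in> {1..M}" for m
    proof -
      define h where "h = (if 2 * i \<le> n then 1 else -1) * real m / real n"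
      have "\<bar>poly P (real i / real n)\<bar> \<le> \<bar>fd h (Suc r) (poly P) (real i / real n)\<bar>
          + 2^(Suc r) * (\<Sum>k=1..Suc r. \<bar>poly P (real i / real n + real k * h)\<bar>)"
        by (rule fd_lead)
      also have "fd h (Suc r) (poly P) (real i / real n) = 0"
        by (rule fd_poly_zero[OF deg])
      also have "(\<Sum>k=1..Suc r. \<bar>poly P (real i / real n + real k * h)\<bar>) = (\<Sum>k=1..r+1. u (\<sigma> k m))"
        using m by (intro sum.cong) (auto simp: u_def h_def sreal)
      finally show ?thesis by (simp add: u_def)
    qed
    have inner: "(\<Sum>m=1..M. u (\<sigma> k m)) \<le> S" if k: "k \<in> {1..r+1}" for k
    proof -
      have inj: "inj_on (\<sigma> k) {1..M}"
      proof (rule inj_onI)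
        fix x y assume x: "x \<in> {1..M}" and y: "y \<in> {1..M}" and e: "\<sigma> k x = \<sigma> k y"
        have "2 * (k * x) \<le> n" "2 * (k * y) \<le> n" using km k x y by auto
        moreover obtain a b where ab: "a = k * x" "b = k * y" by blast
        ultimately have ab2: "2 * a \<le> n" "2 * b \<le> n" by simp_all
        have e': "(if 2*i \<le> n then i + a else i - a) = (if 2*i \<le> n then i + b else i - b)"
          using e unfolding \<sigma>_def ab by simp
        have "a = b" using e' ab2 by (auto split: if_splits)
        then have "k * x = k * y" using ab by simp
        then show "x = y" using k by simp
      qed
      have "(\<Sum>m=1..M. u (\<sigma> k m)) = (\<Sum>j\<in>\<sigma> k ` {1..M}. u j)"
        using sum.reindex[OF inj, of u] by (simp add: comp_def)
      also have "\<dots> \<le> S" unfolding S_def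
        using srange k by (intro sum_mono2) (auto simp: u0)
      finally show ?thesis .
    qed
    have "real M * u i = (\<Sum>m=1..M. u i)" by simp
    also have "\<dots> \<le> (\<Sum>m=1..M. 2^(r+1) * (\<Sum>k=1..r+1. u (\<sigma> k m)))"
      by (intro sum_mono step)
    also have "\<dots> = 2^(r+1) * (\<Sum>k=1..r+1. (\<Sum>m=1..M. u (\<sigma> k m)))"
      by (simp only: sum_distrib_left[symmetric] sum.swap[of _ "{1..M}"])
    also have "\<dots> \<le> 2^(r+1) * (\<Sum>k=1..r+1. S)"
      by (intro mult_left_mono sum_mono inner) auto
    also have "\<dots> = 2^(r+1) * (real r + 1) * S" by simp
    finally have Mu: "real M * u i \<le> 2^(r+1) * (real r + 1) * S" .
    have nle: "real n \<le> 4 * (real r + 1) * real M"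
    proof -
      have "n \<le> (M + 1) * (2 * (r + 1))" using nM by simp
      also have "\<dots> \<le> (2 * M) * (2 * (r + 1))" using M1 by (intro mult_le_mono) auto
      finally have "n \<le> 4 * (r + 1) * M" by (simp add: algebra_simps)
      then have "real n \<le> real (4 * (r + 1) * M)" by (simp only: of_nat_le_iff)
      then show ?thesis by (simp add: algebra_simps)
    qed
    have "real n * u i \<le> 4 * (real r + 1) * real M * u i" by (intro mult_right_mono nle u0)
    also have "\<dots> = 4 * (real r + 1) * (real M * u i)" by simp
    also have "\<dots> \<le> 4 * (real r + 1) * (2^(r+1) * (real r + 1) * S)"
      by (intro mult_left_mono Mu) auto
    also have "\<dots> = (4 * (real r + 1)^2 * 2^(r+1)) * S" by (simp add: power2_eq_square)
    finally show ?thesis .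
  qed
  then show ?thesis by (simp add: u_def S_def)
qed


lemma tele0:
  fixes g :: "nat \<Rightarrow> real"
  assumes "g 1 = 0"
  shows "\<bar>g (Suc k)\<bar> \<le> (\<Sum>j=1..k. \<bar>g (j+1) - g j\<bar>)"
proof (induction k)
  case 0
  then show ?case using assms by simp
next
  case (Suc k)
  have "\<bar>g (Suc (Suc k))\<bar> \<le> \<bar>g (Suc k)\<bar> + \<bar>g (Suc k + 1) - g (Suc k)\<bar>" by simp
  also have "\<dots> \<le> (\<Sum>j=1..Suc k. \<bar>g (j+1) - g j\<bar>)" using Suc by simp
  finally show ?case .
qed

lemma tele:
  fixes g :: "nat \<Rightarrow> real"
  assumes "g 1 = 0" "i \<in> {1..n}"
  shows "\<bar>g i\<bar> \<le> (\<Sum>j=1..n-1. \<bar>g (j+1) - g j\<bar>)"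
proof -
  obtain k where k: "i = Suc k" using assms(2) by (cases i) auto
  have "\<bar>g i\<bar> \<le> (\<Sum>j=1..k. \<bar>g (j+1) - g j\<bar>)" using tele0[of g k, OF assms(1)] k by simp
  also have "\<dots> \<le> (\<Sum>j=1..n-1. \<bar>g (j+1) - g j\<bar>)"
    using k assms(2) by (intro sum_mono2) auto
  finally show ?thesis .
qed

lemma Dk_Suc: "Dk (Suc s) \<theta> = Dk s (D1 \<theta>)"
  unfolding Dk_def funpow_Suc_right by simp

lemma taylor:
  "\<exists>c::nat\<Rightarrow>real. \<forall>i\<in>{1..n}. \<bar>\<theta> i - (\<Sum>k\<le>s. c k * ((real i - 1) gchoose k))\<bar>
      \<le> real n ^ s * (\<Sum>j=1..n-(s+1). \<bar>Dk (s+1) \<theta> j\<bar>)"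
proof (induction s arbitrary: \<theta> n)
  case 0
  have "\<bar>\<theta> i - \<theta> 1\<bar> \<le> (\<Sum>j=1..n-1. \<bar>Dk 1 \<theta> j\<bar>)" if "i \<in> {1..n}" for i
    using tele[of "\<lambda>i. \<theta> i - \<theta> 1" i n] that by (simp add: Dk_def D1_def)
  then show ?case by (intro exI[of _ "\<lambda>_. \<theta> 1"]) simp
next
  case (Suc s)
  obtain c' where c': "\<forall>j\<in>{1..n-1}. \<bar>D1 \<theta> j - (\<Sum>k\<le>s. c' k * ((real j - 1) gchoose k))\<bar>
      \<le> real (n-1) ^ s * (\<Sum>j=1..n-1-(s+1). \<bar>Dk (s+1) (D1 \<theta>) j\<bar>)"
    using Suc.IH[where \<theta>="D1 \<theta>" and n="n-1"] by blast
  define T where "T = (\<Sum>j=1..n-(Suc s+1). \<bar>Dk (Suc s+1) \<theta> j\<bar>)"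
  have T: "(\<Sum>j=1..n-1-(s+1). \<bar>Dk (s+1) (D1 \<theta>) j\<bar>) = T"
    unfolding T_def by (simp add: Dk_Suc[symmetric])
  have T0: "T \<ge> 0" unfolding T_def by (intro sum_nonneg) auto
  define c where "c k = (if k = 0 then \<theta> 1 else c' (k - 1))" for k
  define G where "G x = (\<Sum>k\<le>Suc s. c k * (x gchoose k))" for x :: real
  define G' where "G' x = (\<Sum>k\<le>s. c' k * (x gchoose k))" for x :: real
  have Gs: "G x = \<theta> 1 + (\<Sum>k\<le>s. c' k * (x gchoose Suc k))" for x
    unfolding G_def by (subst sum.atMost_Suc_shift) (simp add: c_def)
  have Gd: "G (x + 1) - G x = G' x" for x
  proof -
    have "G (x + 1) - G x = (\<Sum>k\<le>s. c' k * ((x + 1) gchoose Suc k) - c' k * (x gchoose Suc k))"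
      unfolding Gs by (simp add: sum_subtractf)
    also have "\<dots> = G' x" unfolding G'_def
      by (intro sum.cong refl) (simp add: gbinomial_Suc_Suc[of x] right_diff_distrib[symmetric])
    finally show ?thesis .
  qed
  define g where "g i = \<theta> i - G (real i - 1)" for i
  have g1: "g 1 = 0" unfolding g_def Gs by simp
  have gd: "\<bar>g (j+1) - g j\<bar> \<le> real (n-1) ^ s * T" if j: "j \<in> {1..n-1}" for j
  proof -
    have "g (j+1) - g j = D1 \<theta> j - G' (real j - 1)"
      unfolding g_def D1_def using Gd[of "real j - 1"] by simp
    then show ?thesis using c' j T unfolding G'_def by simp
  qed
  have "\<bar>\<theta> i - (\<Sum>k\<le>Suc s. c k * ((real i - 1) gchoose k))\<bar> \<le> real n ^ Suc s * T"
    if i: "i \<in> {1..n}" for i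
  proof -
    have "\<bar>g i\<bar> \<le> (\<Sum>j=1..n-1. \<bar>g (j+1) - g j\<bar>)" by (rule tele[of g, OF g1 i])
    also have "\<dots> \<le> (\<Sum>j=1..n-1. real (n-1) ^ s * T)" by (intro sum_mono gd)
    also have "\<dots> = real (n-1) * (real (n-1) ^ s * T)" by simp
    also have "\<dots> \<le> real n * (real n ^ s * T)"
      using T0 by (intro mult_mono power_mono mult_right_mono) auto
    also have "\<dots> = real n ^ Suc s * T" by simp
    finally show ?thesis unfolding g_def G_def .
  qed
  then show ?case unfolding T_def by blast
qed


definition bp :: "nat \<Rightarrow> real poly" where
  "bp k = smult (1 / fact k) (\<Prod>i=0..<k. [:- of_nat i, 1:])"

lemma poly_bp: "poly (bp k) x = x gchoose k"
  by (simp add: bp_def poly_prod gbinomial_prod_rev)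

lemma degree_bp: "degree (bp k) \<le> k"
proof -
  have "degree (\<Prod>i=0..<k. [:- of_nat i, 1::real:]) \<le> (\<Sum>i=0..<k. degree [:- of_nat i, 1::real:])"
    using degree_prod_sum_le[of "{0..<k}" "\<lambda>i. [:- of_nat i, 1::real:]"] by (simp add: comp_def)
  also have "\<dots> = k" by simp
  finally show ?thesis unfolding bp_def using degree_smult_le order_trans by blast
qed

theorem lemma11:
  fixes r :: nat
  shows "\<exists>C>0. \<forall>n \<ge> 1. \<forall>\<theta> :: nat \<Rightarrow> real.
           supnorm n (\<lambda>i. \<theta> i - proj n r \<theta> i) \<le> C * TV n (r + 1) \<theta>"
proof -
  define CI where "CI = 4 * (real r + 1)^2 * 2^(r+1)"
  have CI0: "CI \<ge> 0" unfolding CI_def by simp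
  have main: "supnorm n (\<lambda>i. \<theta> i - proj n r \<theta> i) \<le> (1 + CI) * TV n (r + 1) \<theta>"
    if n: "n \<ge> 1" for n and \<theta> :: "nat \<Rightarrow> real"
  proof -
    obtain p where p: "degree p \<le> r" "proj n r \<theta> = polyvec n p"
      "\<forall>q. degree q \<le> r \<longrightarrow> (\<Sum>i=1..n. (\<theta> i - proj n r \<theta> i) * polyvec n q i) = 0"
      using proj_char[of r n \<theta>] by blast
    obtain c where c: "\<forall>i\<in>{1..n}. \<bar>\<theta> i - (\<Sum>k\<le>r. c k * ((real i - 1) gchoose k))\<bar>
      \<le> real n ^ r * (\<Sum>j=1..n-(r+1). \<bar>Dk (r+1) \<theta> j\<bar>)"
      using taylor[of n \<theta> r] by blast
    define H where "H = TV n (r + 1) \<theta>"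
    have H0: "H \<ge> 0" unfolding H_def TV_def by (intro mult_nonneg_nonneg sum_nonneg) auto
    define Q0 where "Q0 = (\<Sum>k\<le>r. smult (c k) (bp k))"
    define Q where "Q = pcompose Q0 [:-1, real n:]"
    have dQ0: "degree Q0 \<le> r" unfolding Q0_def
      by (intro degree_sum_le) (auto intro: order_trans[OF degree_smult_le] order_trans[OF degree_bp])
    have dQ: "degree Q \<le> r" unfolding Q_def using degree_pcompose_le[of Q0 "[:-1, real n:]"] dQ0
      by (auto intro: order_trans)
    have polyQ: "poly Q (real i / real n) = (\<Sum>k\<le>r. c k * ((real i - 1) gchoose k))" for i
      using n by (simp add: Q_def Q0_def poly_pcompose poly_sum poly_bp)
    define h where "h i = \<theta> i - poly Q (real i / real n)" for i
    have hH: "\<bar>h i\<bar> \<le> H" if "i \<in> {1..n}" for i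
      using c that unfolding h_def polyQ H_def TV_def by simp
    define e where "e i = \<theta> i - proj n r \<theta> i" for i
    define u where "u = polyvec n (p - Q)"
    have dpQ: "degree (p - Q) \<le> r" using p(1) dQ by (intro degree_diff_le)
    have ue: "u i = h i - e i" if "i \<in> {1..n}" for i
      using that unfolding u_def h_def e_def p(2) by (simp add: polyvec_def)
    have orth: "(\<Sum>i=1..n. e i * u i) = 0" using p(3) dpQ unfolding e_def u_def by blast
    define S where "S = (\<Sum>i=1..n. \<bar>u i\<bar>)"
    have S0: "S \<ge> 0" unfolding S_def by (intro sum_nonneg) auto
    have "(\<Sum>i=1..n. (u i)\<^sup>2) = (\<Sum>i=1..n. h i * u i) - (\<Sum>i=1..n. e i * u i)"
      unfolding sum_subtractf[symmetric]
      by (intro sum.cong refl) (simp add: ue power2_eq_square algebra_simps)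
    also have "\<dots> = (\<Sum>i=1..n. h i * u i)" using orth by simp
    also have "\<dots> \<le> (\<Sum>i=1..n. H * \<bar>u i\<bar>)"
    proof (intro sum_mono)
      fix i assume i: "i \<in> {1..n}"
      have "h i * u i \<le> \<bar>h i\<bar> * \<bar>u i\<bar>" by (simp add: abs_mult[symmetric])
      also have "\<dots> \<le> H * \<bar>u i\<bar>" using hH[OF i] by (intro mult_right_mono) auto
      finally show "h i * u i \<le> H * \<bar>u i\<bar>" .
    qed
    also have "\<dots> = H * S" unfolding S_def by (simp add: sum_distrib_left)
    finally have su: "(\<Sum>i=1..n. (u i)\<^sup>2) \<le> H * S" .
    have "S\<^sup>2 \<le> (\<Sum>i=1..n. (\<bar>u i\<bar>)\<^sup>2) * real n"
      unfolding S_def using sum_squared_le_sum_of_squares[of "\<lambda>i. \<bar>u i\<bar>" "{1..n}"] by simp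
    also have "\<dots> \<le> (H * S) * real n" using su by (intro mult_right_mono) auto
    finally have "S * S \<le> (real n * H) * S" by (simp add: power2_eq_square algebra_simps)
    then have SnH: "S \<le> real n * H"
      using S0 by (cases "S = 0") (auto simp: H0 mult_le_cancel_right)
    have "\<bar>e i\<bar> \<le> (1 + CI) * H" if i: "i \<in> {1..n}" for i
    proof -
      have "real n * \<bar>u i\<bar> \<le> CI * S"
        using inv_ineq[OF dpQ n i] unfolding CI_def S_def u_def
        using i by (simp add: polyvec_def)
      also have "\<dots> \<le> CI * (real n * H)" using SnH CI0 by (intro mult_left_mono)
      finally have "real n * \<bar>u i\<bar> \<le> real n * (CI * H)" by (simp add: algebra_simps)
      then have "\<bar>u i\<bar> \<le> CI * H" using n by simp
      moreover have "\<bar>e i\<bar> \<le> \<bar>h i\<bar> + \<bar>u i\<bar>" using ue[OF i] by simp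
      ultimately show ?thesis using hH[OF i] by (simp add: algebra_simps)
    qed
    then show ?thesis unfolding supnorm_def H_def[symmetric] e_def[symmetric]
      using n by (subst Max_le_iff) auto
  qed
  show ?thesis
    by (rule exI[of _ "1 + CI"]) (use CI0 main in auto)
qed

end
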